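(* Let $\Gamma$ be a minimal subgroup of $\mathrm{Homeo}_+(S^1)$ admitting no $\Gamma$-invariant probability measure on $S^1$, and let $\theta\in\mathrm{Homeo}_+(S^1)$ be a periodic homeomorphism commuting with every element of $\Gamma$ such that for every $x\in S^1$ every closed interval contained in $[x,\theta(x)[$ is $\Gamma$-contractible (with $[x,\theta(x)[$ meaning the whole circle if $\theta=\mathrm{id}$). Let $\kappa$ be the period of $\theta$ and let $I_0\subset S^1$ be a closed interval such that $I_0,\theta(I_0),\dots,\theta^{\kappa-1}(I_0)$ are pairwise disjoint. Then there exists $h\in\Gamma$ such that $$\emptyset\neq\mathrm{Fix}(h)\subset \bigcup_{j=0}^{\kappa-1}\mathrm{Int}(\theta^j(I_0))\quad\text{and}\quad h\Big(S^1\setminus\bigcup_{j=0}^{\kappa-1}\mathrm{Int}(\theta^j(I_0))\Big)\subset\bigcup_{j=0}^{\kappa-1}\mathrm{Int}(\theta^j(I_0)).$$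
   Context: $\Gamma$ is minimal if every orbit is dense. A closed interval $I\subset S^1$ is $\Gamma$-contractible if there is a sequence $(g_n)$ in $\Gamma$ with the length of $g_n(I)$ tending to $0$. $[x,\theta(x)[$ denotes the half-open arc from $x$ to $\theta(x)$ in the positive direction. $\mathrm{Fix}(h)$ is the fixed point set of $h$. *)

theory Defs
  imports "HOL-Analysis.Analysis" "HOL-Probability.Probability"
begin

definition S1 :: "complex set" where
  "S1 = sphere 0 1"

definition cov :: "real \<Rightarrow> complex" where
  "cov t = cis (2 * pi * t)"

text \<open>Orientation-preserving homeomorphisms of S^1: maps admitting a continuous
  strictly increasing lift F with F(t+1) = F t + 1.  To make group elements
  canonical, they are required to be the identity off the circle.\<close>

definition homeo_plus :: "(complex \<Rightarrow> complex) \<Rightarrow> bool" where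
  "homeo_plus f \<longleftrightarrow>
     (\<exists>F::real \<Rightarrow> real. continuous_on UNIV F \<and> strict_mono F \<and>
        (\<forall>t. F (t + 1) = F t + 1) \<and> (\<forall>t. f (cov t) = cov (F t))) \<and>
     (\<forall>z. z \<notin> S1 \<longrightarrow> f z = z)"

definition homeo_plus_subgroup :: "(complex \<Rightarrow> complex) set \<Rightarrow> bool" where
  "homeo_plus_subgroup \<Gamma> \<longleftrightarrow>
     (\<forall>f\<in>\<Gamma>. homeo_plus f) \<and> id \<in> \<Gamma> \<and>
     (\<forall>f\<in>\<Gamma>. \<forall>g\<in>\<Gamma>. f \<circ> g \<in> \<Gamma>) \<and> (\<forall>f\<in>\<Gamma>. inv f \<in> \<Gamma>)"

definition minimal_action :: "(complex \<Rightarrow> complex) set \<Rightarrow> bool" where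
  "minimal_action \<Gamma> \<longleftrightarrow> (\<forall>x\<in>S1. closure {g x | g. g \<in> \<Gamma>} = S1)"

definition has_invariant_prob :: "(complex \<Rightarrow> complex) set \<Rightarrow> bool" where
  "has_invariant_prob \<Gamma> \<longleftrightarrow>
     (\<exists>M. prob_space M \<and> space M = S1 \<and> sets M = sets (restrict_space borel S1) \<and>
          (\<forall>g\<in>\<Gamma>. distr M M g = M))"

definition closed_arc :: "complex set \<Rightarrow> bool" where
  "closed_arc I \<longleftrightarrow> (\<exists>a b. a < b \<and> b < a + 1 \<and> I = cov ` {a..b})"

definition arc_len :: "complex set \<Rightarrow> real" where
  "arc_len A = measure lborel ({0..<1} \<inter> cov -` A)"

definition contractible :: "(complex \<Rightarrow> complex) set \<Rightarrow> complex set \<Rightarrow> bool" where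
  "contractible \<Gamma> I \<longleftrightarrow>
     (\<exists>gs::nat \<Rightarrow> complex \<Rightarrow> complex. (\<forall>n. gs n \<in> \<Gamma>) \<and>
        (\<lambda>n. arc_len (gs n ` I)) \<longlonglongrightarrow> 0)"

text \<open>Half-open arc [x,y[ in the positive direction (empty if x = y).\<close>
definition hoarc :: "complex \<Rightarrow> complex \<Rightarrow> complex set" where
  "hoarc x y = {z. \<exists>s d u. cov s = x \<and> cov (s + d) = y \<and> 0 \<le> d \<and> d < 1 \<and>
                          0 \<le> u \<and> u < d \<and> z = cov (s + u)}"

definition Fix :: "(complex \<Rightarrow> complex) \<Rightarrow> complex set" where
  "Fix h = {z \<in> S1. h z = z}"

definition periodic_homeo :: "(complex \<Rightarrow> complex) \<Rightarrow> bool" where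
  "periodic_homeo \<theta> \<longleftrightarrow> (\<exists>n>0. \<forall>z\<in>S1. (\<theta> ^^ n) z = z)"

definition period :: "(complex \<Rightarrow> complex) \<Rightarrow> nat" where
  "period \<theta> = (LEAST n. n > 0 \<and> (\<forall>z\<in>S1. (\<theta> ^^ n) z = z))"

end

theory Submission
  imports Defs
begin


definition islift :: "(real \<Rightarrow> real) \<Rightarrow> bool" where
  "islift F \<longleftrightarrow> continuous_on UNIV F \<and> strict_mono F \<and> (\<forall>t. F (t + 1) = F t + 1)"

lemma cov_int: "cov (t + of_int k) = cov t"
proof -
  have "cov (t + of_int k) = cis (2*pi*t) * cis (2 * pi * of_int k)"
    unfolding cov_def cis_mult by (simp add: distrib_left)
  then show ?thesis unfolding cov_def by simp
qed

lemma cov_eq: "cov x = cov y \<Longrightarrow> \<exists>k::int. x = y + of_int k"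
proof -
  assume "cov x = cov y"
  then have c1: "cis (2*pi*x - 2*pi*y) = 1" unfolding cov_def cis_divide[symmetric] by simp
  have "cos (2*pi*x - 2*pi*y) = 1" using arg_cong[where f=Re, OF c1] by simp
  then obtain n::int where "2*pi*x - 2*pi*y = real_of_int n * 2 * pi" unfolding cos_one_2pi_int by blast
  then have "(2*pi)*x = (2*pi)*(y + of_int n)" by (simp add: algebra_simps)
  then have "x = y + of_int n" by simp
  then show ?thesis by blast
qed

lemma cov_S1: "cov t \<in> S1"
  unfolding cov_def S1_def by simp

lemma cov_surj: "z \<in> S1 \<Longrightarrow> \<exists>t. z = cov t"
proof -
  assume "z \<in> S1"
  then have "norm z = 1" unfolding S1_def by simp
  then have "z \<noteq> 0" and "sgn z = z" by (auto simp: sgn_div_norm)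
  then have "z = cis (Arg z)" using cis_Arg by metis
  then have "z = cov (Arg z / (2*pi))" unfolding cov_def by simp
  then show ?thesis by blast
qed

lemma cov_cont: "continuous_on A cov"
  unfolding cov_def by (intro continuous_intros)

lemma islift_int: "islift F \<Longrightarrow> F (t + of_int k) = F t + of_int k"
proof -
  assume l: "islift F"
  then have s: "\<And>t. F (t+1) = F t + 1" unfolding islift_def by blast
  have p: "F (t + of_nat n) = F t + of_nat n" for t n
  proof (induction n arbitrary: t)
    case (Suc n)
    have "F (t + of_nat (Suc n)) = F ((t + of_nat n) + 1)" by (simp add: algebra_simps)
    also have "\<dots> = F t + of_nat (Suc n)" using s Suc by simp
    finally show ?case .
  qed simp
  show ?thesis
  proof (cases "k \<ge> 0")
    case True then show ?thesis using p[of t "nat k"] by simp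
  next
    case False
    have "F (t + of_int k) + of_nat (nat (-k)) = F t" using p[of "t + of_int k" "nat (-k)"] False by simp
    then show ?thesis using False by simp
  qed
qed

lemma homeo_lift: "homeo_plus f \<Longrightarrow> \<exists>F. islift F \<and> (\<forall>t. f (cov t) = cov (F t))"
  unfolding homeo_plus_def islift_def by blast

lemma lift_S1: "(\<forall>t. f (cov t) = cov (F t)) \<Longrightarrow> z \<in> S1 \<Longrightarrow> f z \<in> S1"
  using cov_surj cov_S1 by metis

lemma islift_comp: "islift F \<Longrightarrow> islift G \<Longrightarrow> islift (F \<circ> G)"
  unfolding islift_def
  by (auto intro: continuous_on_compose2[where t=UNIV] simp: strict_mono_def)

lemma islift_id: "islift id"
  unfolding islift_def by (auto simp: strict_mono_def)

lemma islift_pow: "islift F \<Longrightarrow> islift (F ^^ n)"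
  by (induction n) (auto simp: islift_id islift_comp)

lemma lift_pow_cov: "(\<forall>t. f (cov t) = cov (F t)) \<Longrightarrow> (f ^^ n) (cov t) = cov ((F ^^ n) t)"
  by (induction n arbitrary: t) auto

lemma islift_cont: "islift F \<Longrightarrow> continuous_on A F"
  unfolding islift_def using continuous_on_subset by blast

lemma islift_mono: "islift F \<Longrightarrow> x < y \<Longrightarrow> F x < F y"
  unfolding islift_def strict_mono_def by blast

lemma islift_le: "islift F \<Longrightarrow> x \<le> y \<Longrightarrow> F x \<le> F y"
  using islift_mono by (metis order_le_less)

lemma islift_image: "islift F \<Longrightarrow> x \<le> y \<Longrightarrow> F ` {x..y} = {F x..F y}"
proof
  assume l: "islift F" and xy: "x \<le> y"
  show "F ` {x..y} \<subseteq> {F x..F y}" using islift_le[OF l] by auto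
  show "{F x..F y} \<subseteq> F ` {x..y}"
  proof
    fix s assume "s \<in> {F x..F y}"
    then obtain t where "x \<le> t" "t \<le> y" "F t = s"
      using IVT'[of F x s y] xy islift_cont[OF l] by auto
    then show "s \<in> F ` {x..y}" by auto
  qed
qed

lemma islift_plus1: "islift F \<Longrightarrow> F (x + 1) = F x + 1"
  unfolding islift_def by blast

lemma cov_arc_split:
  assumes "x < y" "y \<le> x + 1"
  shows "cov ` {x<..<y} = S1 - cov ` {y..x+1}"
proof
  show "cov ` {x<..<y} \<subseteq> S1 - cov ` {y..x+1}"
  proof
    fix z assume "z \<in> cov ` {x<..<y}"
    then obtain s where s: "x < s" "s < y" "z = cov s" by auto
    have "z \<notin> cov ` {y..x+1}"
    proof
      assume "z \<in> cov ` {y..x+1}"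
      then obtain u where u: "y \<le> u" "u \<le> x+1" "cov s = cov u" using s by auto
      then obtain k::int where "s = u + of_int k" using cov_eq by blast
      then have "of_int k > (-1::real)" "of_int k < (0::real)" using s u by auto
      then show False by simp
    qed
    then show "z \<in> S1 - cov ` {y..x+1}" using s cov_S1 by auto
  qed
  show "S1 - cov ` {y..x+1} \<subseteq> cov ` {x<..<y}"
  proof
    fix z assume z: "z \<in> S1 - cov ` {y..x+1}"
    then obtain s0 where s0: "z = cov s0" using cov_surj by blast
    define s where "s = s0 - of_int (floor (s0 - x))"
    have zs: "z = cov s" unfolding s_def s0 using cov_int[of s0 "- floor (s0 - x)"] by simp
    have "x \<le> s" "s < x + 1" unfolding s_def by linarith+
    show "z \<in> cov ` {x<..<y}"
    proof (cases "x < s \<and> s < y")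
      case True then show ?thesis using zs by auto
    next
      case False
      then have "s = x \<or> (y \<le> s \<and> s \<le> x + 1)" using \<open>x \<le> s\<close> \<open>s < x + 1\<close> by auto
      then have "z \<in> cov ` {y..x+1}"
      proof
        assume "s = x"
        then have "z = cov (x + 1)" using zs cov_int[of x 1] by simp
        then show ?thesis using assms by auto
      qed (use zs in auto)
      then show ?thesis using z by blast
    qed
  qed
qed

lemma cov_open_arc:
  assumes "x < y" "y \<le> x + 1"
  shows "openin (top_of_set S1) (cov ` {x<..<y})"
proof -
  have "compact (cov ` {y..x+1})" by (intro compact_continuous_image cov_cont) simp
  then have "closed (cov ` {y..x+1})" by (rule compact_imp_closed)
  then have "openin (top_of_set S1) (S1 \<inter> - cov ` {y..x+1})"
    by (intro openin_open_Int) auto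
  then show ?thesis using cov_arc_split[OF assms] by (simp add: Diff_eq)
qed

lemma arc_len_lb:
  assumes "x \<le> y" "y \<le> x + 1"
  shows "(y - x) / 2 \<le> arc_len (cov ` {x..y})"
proof -
  define l where "l = y - x"
  define k where "k = floor x"
  define x' where "x' = x - of_int k"
  have x': "0 \<le> x'" "x' < 1" unfolding x'_def k_def by linarith+
  define B where "B = {0..<1} \<inter> cov -` (cov ` {x..y})"
  have "compact (cov ` {x..y})" by (intro compact_continuous_image cov_cont) simp
  then have "closed (cov ` {x..y})" by (rule compact_imp_closed)
  then have "closed (cov -` (cov ` {x..y}))"
    using continuous_closed_vimage[of "cov ` {x..y}" cov] cov_cont[of UNIV]
    by (simp add: continuous_on_eq_continuous_at)
  then have "cov -` (cov ` {x..y}) \<in> sets lborel" by simp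
  moreover have "{0..<1::real} \<in> fmeasurable lborel"
    by (intro fmeasurableI) auto
  ultimately have Bf: "B \<in> fmeasurable lborel" unfolding B_def
    by (rule fmeasurable_Int_fmeasurable[rotated])
  have l: "0 \<le> l" "l \<le> 1" using assms unfolding l_def by auto
  obtain J where J: "J \<subseteq> B" "J \<in> sets lborel" "measure lborel J = l / 2"
  proof (cases "x' + l/2 \<le> 1")
    case True
    have "{x'..<x'+l/2} \<subseteq> B"
    proof
      fix u assume u: "u \<in> {x'..<x'+l/2}"
      have u1: "x - of_int k \<le> u" "u < x - of_int k + l/2" using u unfolding x'_def by auto
      have "l/2 \<le> l" using l by simp
      then have "u + of_int k \<ge> x" "u + of_int k \<le> x + l" using u1 by linarith+
      then have m: "u + of_int k \<in> {x..y}" unfolding l_def by auto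
      have "cov u = cov (u + of_int k)" by (simp add: cov_int)
      then have "cov u \<in> cov ` {x..y}" using m by auto
      then show "u \<in> B" unfolding B_def using u x' True by auto
    qed
    then show ?thesis using that[of "{x'..<x'+l/2}"] l by simp
  next
    case False
    have "{0..<l/2} \<subseteq> B"
    proof
      fix u assume u: "u \<in> {0..<l/2}"
      have u1: "0 \<le> u" "u < l/2" using u by auto
      have f1: "x - of_int k + l/2 > 1" "x - of_int k < 1" using False x' unfolding x'_def by auto
      have "u + of_int (k+1) \<ge> x" "u + of_int (k+1) \<le> x + l" using u1 f1 by linarith+
      then have m: "u + of_int (k+1) \<in> {x..y}" unfolding l_def by auto
      have "cov u = cov (u + of_int (k + 1))" by (rule cov_int[symmetric])
      then have "cov u \<in> cov ` {x..y}" using m by auto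
      then show "u \<in> B" unfolding B_def using u l by auto
    qed
    then show ?thesis using that[of "{0..<l/2}"] l by simp
  qed
  have "measure lborel J \<le> measure lborel B"
    by (rule measure_mono_fmeasurable[OF J(1) J(2) Bf])
  then show ?thesis using J(3) unfolding arc_len_def B_def l_def by simp
qed



lemma period_facts:
  assumes "periodic_homeo \<theta>"
  shows "period \<theta> > 0 \<and> (\<forall>z\<in>S1. (\<theta> ^^ period \<theta>) z = z)"
proof -
  obtain n where "n > 0 \<and> (\<forall>z\<in>S1. (\<theta> ^^ n) z = z)" using assms unfolding periodic_homeo_def by blast
  then show ?thesis unfolding period_def by (rule LeastI)
qed

lemma pow_mod:
  assumes per: "\<forall>z\<in>S1. (\<theta> ^^ K) z = z" and th: "\<forall>z\<in>S1. \<theta> z \<in> S1" and z: "z \<in> S1"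
  shows "(\<theta> ^^ j) z = (\<theta> ^^ (j mod K)) z"
proof -
  have m: "(\<theta> ^^ (K * q)) z = z" for q
  proof (induction q)
    case (Suc q)
    have "(\<theta> ^^ (K * Suc q)) z = (\<theta> ^^ K) ((\<theta> ^^ (K * q)) z)"
      by (simp add: funpow_add add.commute)
    then show ?case using Suc per z by simp
  qed simp
  have "(\<theta> ^^ j) z = (\<theta> ^^ (j mod K + K * (j div K))) z" by simp
  also have "\<dots> = (\<theta> ^^ (j mod K)) ((\<theta> ^^ (K * (j div K))) z)" by (simp only: funpow_add comp_def)
  finally show ?thesis using m by simp
qed

lemma finite_shifts:
  assumes "finite P"
  shows "finite {e::real. \<exists>p\<in>P. \<exists>k::int. e = p + of_int k \<and> lo \<le> e \<and> e \<le> hi}"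
proof -
  have "{e::real. \<exists>p\<in>P. \<exists>k::int. e = p + of_int k \<and> lo \<le> e \<and> e \<le> hi}
        \<subseteq> (\<Union>p\<in>P. (\<lambda>k. p + of_int k) ` {ceiling (lo - p)..floor (hi - p)})"
  proof
    fix e assume "e \<in> {e::real. \<exists>p\<in>P. \<exists>k::int. e = p + of_int k \<and> lo \<le> e \<and> e \<le> hi}"
    then obtain p k where pk: "p \<in> P" "e = p + of_int k" "lo \<le> e" "e \<le> hi" by blast
    then have "k \<in> {ceiling (lo - p)..floor (hi - p)}"
      by (simp add: ceiling_le_iff le_floor_iff)
    then show "e \<in> (\<Union>p\<in>P. (\<lambda>k. p + of_int k) ` {ceiling (lo - p)..floor (hi - p)})"
      using pk by blast
  qed
  moreover have "finite (\<Union>p\<in>P. (\<lambda>k. p + of_int k) ` {ceiling (lo - p)..floor (hi - p)})"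
    using assms by auto
  ultimately show ?thesis by (rule finite_subset)
qed

lemma commute_pow:
  assumes "h \<circ> \<theta> = \<theta> \<circ> h"
  shows "h ((\<theta> ^^ j) w) = (\<theta> ^^ j) (h w)"
proof (induction j)
  case (Suc j)
  have "h (\<theta> ((\<theta> ^^ j) w)) = \<theta> (h ((\<theta> ^^ j) w))" using fun_cong[OF assms] by simp
  then show ?case using Suc by simp
qed simp



lemma cover:
  fixes T :: "real \<Rightarrow> real"
  assumes l: "islift T" and ab: "a < b" and bc: "b < c"
    and cS: "c = (T ^^ i0) a + of_int k0"
    and fin: "finite {e. \<exists>i k. e = (T ^^ i) b + of_int (k::int) \<and> t - 1 \<le> e \<and> e \<le> t}"
    and nt: "\<forall>i (k::int). \<not> ((T ^^ i) a + of_int k < t \<and> t < (T ^^ i) b + of_int k)"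
  shows "\<exists>j (k::int) u. b \<le> u \<and> u \<le> c \<and> t = (T ^^ j) u + of_int k"
proof -
  define Et where "Et = {e. \<exists>i k. e = (T ^^ i) b + of_int (k::int) \<and> t - 1 \<le> e \<and> e \<le> t}"
  have e0: "b + of_int (floor (t - b)) \<in> Et" unfolding Et_def
    by (rule CollectI, rule exI[of _ 0], rule exI[of _ "floor (t - b)"]) (simp; linarith)
  have Ene: "Et \<noteq> {}" using e0 by blast
  define e where "e = Max Et"
  have eE: "e \<in> Et" unfolding e_def using fin Ene Et_def by (intro Max_in) auto
  have emax: "\<And>x. x \<in> Et \<Longrightarrow> x \<le> e" unfolding e_def using fin Et_def by (intro Max_ge) auto
  obtain j k where ej: "e = (T ^^ j) b + of_int k" "t - 1 \<le> e" "e \<le> t" using eE unfolding Et_def by blast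
  have lj: "islift (T ^^ j)" by (rule islift_pow[OF l])
  have "t \<le> (T ^^ j) c + of_int k"
  proof (rule ccontr)
    assume "\<not> t \<le> (T ^^ j) c + of_int k"
    then have tg: "(T ^^ j) c + of_int k < t" by simp
    have "(T ^^ j) c = (T ^^ j) ((T ^^ i0) a) + of_int k0"
      using islift_int[OF lj] cS by simp
    also have "(T ^^ j) ((T ^^ i0) a) = (T ^^ (j + i0)) a" by (simp add: funpow_add)
    finally have s': "(T ^^ j) c + of_int k = (T ^^ (j+i0)) a + of_int (k0 + k)" by simp
    define e' where "e' = (T ^^ (j+i0)) b + of_int (k0 + k)"
    have "(T ^^ (j+i0)) a < (T ^^ (j+i0)) b" using islift_mono[OF islift_pow[OF l] ab] .
    then have e's: "(T ^^ j) c + of_int k < e'" unfolding e'_def using s' by simp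
    have "(T ^^ j) b < (T ^^ j) c" using islift_mono[OF lj bc] .
    then have ee: "e < e'" using e's ej by simp
    show False
    proof (cases "e' \<le> t")
      case True
      have "t - 1 \<le> e'" using ee ej(2) by linarith
      then have "e' = (T ^^ (j+i0)) b + of_int (k0+k) \<and> t - 1 \<le> e' \<and> e' \<le> t"
        using True unfolding e'_def by blast
      then have "e' \<in> Et" unfolding Et_def by blast
      then show False using emax ee by fastforce
    next
      case False
      then show False using nt s' tg e'_def by (metis linorder_not_le)
    qed
  qed
  then have "t - of_int k \<in> {(T ^^ j) b..(T ^^ j) c}" using ej by auto
  then have "t - of_int k \<in> (T ^^ j) ` {b..c}" using islift_image[OF lj] bc by simp
  then obtain u where "u \<in> {b..c}" "t - of_int k = (T ^^ j) u" by blast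
  then show ?thesis by (intro exI[of _ j] exI[of _ k] exI[of _ u]) auto
qed



theorem corollary2p7:
  fixes \<Gamma> :: "(complex \<Rightarrow> complex) set"
    and \<theta> :: "complex \<Rightarrow> complex"
    and I0 :: "complex set"
  assumes subgrp: "homeo_plus_subgroup \<Gamma>"
    and minimal: "minimal_action \<Gamma>"
    and no_inv: "\<not> has_invariant_prob \<Gamma>"
    and theta_homeo: "homeo_plus \<theta>"
    and theta_per: "periodic_homeo \<theta>"
    and commute: "\<forall>g\<in>\<Gamma>. g \<circ> \<theta> = \<theta> \<circ> g"
    and contr: "\<forall>x\<in>S1. \<forall>J. closed_arc J \<and>
                   J \<subseteq> (if (\<forall>z\<in>S1. \<theta> z = z) then S1 else hoarc x (\<theta> x))
                   \<longrightarrow> contractible \<Gamma> J"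
    and I0: "closed_arc I0"
    and disj: "\<forall>i<period \<theta>. \<forall>j<period \<theta>. i \<noteq> j \<longrightarrow>
                 (\<theta> ^^ i) ` I0 \<inter> (\<theta> ^^ j) ` I0 = {}"
  shows "\<exists>h\<in>\<Gamma>.
           Fix h \<noteq> {} \<and>
           Fix h \<subseteq> (\<Union>j<period \<theta>. (top_of_set S1) interior_of ((\<theta> ^^ j) ` I0)) \<and>
           h ` (S1 - (\<Union>j<period \<theta>. (top_of_set S1) interior_of ((\<theta> ^^ j) ` I0)))
             \<subseteq> (\<Union>j<period \<theta>. (top_of_set S1) interior_of ((\<theta> ^^ j) ` I0))"
proof -
  define K where "K = period \<theta>"
  have Kp: "K > 0" and Kper: "\<forall>z\<in>S1. (\<theta> ^^ K) z = z"
    using period_facts[OF theta_per] unfolding K_def by auto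
  obtain T where Tl: "islift T" and Tc: "\<forall>t. \<theta> (cov t) = cov (T t)"
    using homeo_lift[OF theta_homeo] by blast
  have thS1: "\<forall>z\<in>S1. \<theta> z \<in> S1" using lift_S1[OF Tc] by blast
  have powc: "(\<theta> ^^ j) (cov t) = cov ((T ^^ j) t)" for j t using lift_pow_cov[OF Tc] .
  obtain a b where ab: "a < b" "b < a + 1" and I0d: "I0 = cov ` {a..b}"
    using I0 unfolding closed_arc_def by blast
  have I0S1: "I0 \<subseteq> S1" using I0d cov_S1 by auto
  have powimg: "(\<theta> ^^ j) ` I0 = cov ` {(T ^^ j) a..(T ^^ j) b}" for j
  proof -
    have "(\<theta> ^^ j) ` I0 = cov ` ((T ^^ j) ` {a..b})" unfolding I0d image_image powc by simp
    then show ?thesis using islift_image[OF islift_pow[OF Tl], of a b j] ab by simp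
  qed
  define U where "U = (\<Union>j<K. (top_of_set S1) interior_of ((\<theta> ^^ j) ` I0))"
  have Uin: "cov t \<in> U" if "(T ^^ j) a < t" "t < (T ^^ j) b" for j t
  proof -
    have lj: "islift (T ^^ j)" by (rule islift_pow[OF Tl])
    have "(T ^^ j) b \<le> (T ^^ j) (a + 1)" using islift_le[OF lj, of b "a+1"] ab by simp
    then have "(T ^^ j) b \<le> (T ^^ j) a + 1" using islift_plus1[OF lj, of a] by simp
    then have op: "openin (top_of_set S1) (cov ` {(T ^^ j) a<..<(T ^^ j) b})"
      using cov_open_arc islift_mono[OF lj ab(1)] by blast
    have eq: "(\<theta> ^^ j) ` I0 = (\<theta> ^^ (j mod K)) ` I0"
      by (rule image_cong) (use pow_mod[OF Kper thS1] I0S1 in auto)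
    have "cov ` {(T ^^ j) a<..<(T ^^ j) b} \<subseteq> (\<theta> ^^ j) ` I0"
      unfolding powimg by (rule image_mono) auto
    then have sub: "cov ` {(T ^^ j) a<..<(T ^^ j) b} \<subseteq> (\<theta> ^^ (j mod K)) ` I0"
      using eq by simp
    have "cov t \<in> (top_of_set S1) interior_of ((\<theta> ^^ (j mod K)) ` I0)"
      using interior_of_maximal[OF sub op] that by auto
    moreover have "j mod K < K" using Kp by simp
    ultimately show ?thesis unfolding U_def by blast
  qed
  have finE: "finite {e. \<exists>i k. e = (T ^^ i) x + of_int (k::int) \<and> lo \<le> e \<and> e \<le> hi}" for x lo hi
  proof -
    have "{e. \<exists>i k. e = (T ^^ i) x + of_int (k::int) \<and> lo \<le> e \<and> e \<le> hi}
      \<subseteq> {e::real. \<exists>p\<in>(\<lambda>i. (T ^^ i) x) ` {..<K}. \<exists>k::int. e = p + of_int k \<and> lo \<le> e \<and> e \<le> hi}"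
    proof
      fix e assume "e \<in> {e. \<exists>i k. e = (T ^^ i) x + of_int (k::int) \<and> lo \<le> e \<and> e \<le> hi}"
      then obtain i and k::int where ik: "e = (T ^^ i) x + of_int k" "lo \<le> e" "e \<le> hi" by blast
      have "cov ((T ^^ i) x) = cov ((T ^^ (i mod K)) x)"
        using powc pow_mod[OF Kper thS1 cov_S1] by metis
      then obtain k' where "(T ^^ i) x = (T ^^ (i mod K)) x + of_int k'" using cov_eq by blast
      then have "e = (T ^^ (i mod K)) x + of_int (k' + k)" using ik by simp
      moreover have "i mod K < K" using Kp by simp
      ultimately show "e \<in> {e::real. \<exists>p\<in>(\<lambda>i. (T ^^ i) x) ` {..<K}. \<exists>k::int. e = p + of_int k \<and> lo \<le> e \<and> e \<le> hi}"
        using ik by blast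
    qed
    moreover have "finite {e::real. \<exists>p\<in>(\<lambda>i. (T ^^ i) x) ` {..<K}. \<exists>k::int. e = p + of_int k \<and> lo \<le> e \<and> e \<le> hi}"
      by (rule finite_shifts) simp
    ultimately show ?thesis by (rule finite_subset)
  qed
  define Sc where "Sc = {e. \<exists>i k. e = (T ^^ i) a + of_int (k::int) \<and> b < e \<and> e \<le> a + 1}"
  have Scfin: "finite Sc"
    by (rule finite_subset[OF _ finE[of a b "a+1"]]) (auto simp: Sc_def)
  have a1: "a + 1 \<in> Sc" unfolding Sc_def using ab
    by (intro CollectI exI[of _ 0] exI[of _ 1]) auto
  define c where "c = Min Sc"
  have cS: "c \<in> Sc" using Scfin a1 unfolding c_def by (intro Min_in) auto
  have cmin: "\<And>x. x \<in> Sc \<Longrightarrow> c \<le> x" using Scfin unfolding c_def by auto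
  obtain i0 k0 where c0: "c = (T ^^ i0) a + of_int k0" "b < c" "c \<le> a + 1"
    using cS unfolding Sc_def by blast
  define s where "s = b - (b - a) / 4"
  have d4: "(b - a) / 4 > 0" "(b - a) / 4 < b - a" using ab by auto
  have s: "a < s" "s < b" "c < s + 1" "s < c" using ab c0(2,3) d4 unfolding s_def by linarith+
  define L where "L = cov ` {s..c}"
  have Lcl: "closed_arc L" unfolding closed_arc_def L_def using s by auto
  have LS1: "L \<subseteq> S1" unfolding L_def using cov_S1 by auto
  have Lcon: "contractible \<Gamma> L"
  proof (cases "\<forall>z\<in>S1. \<theta> z = z")
    case True
    then show ?thesis using contr[rule_format, OF cov_S1[of s], of L] Lcl LS1 by simp
  next
    case False
    have "K \<noteq> 1" using False Kper by auto
    then have K1: "1 < K" using Kp by simp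
    have disj10: "\<theta> ` I0 \<inter> I0 = {}" using disj[folded K_def, rule_format, of 1 0] K1 Kp by simp
    define n where "n = floor (T s - s)"
    define y where "y = T s - of_int n"
    have ys: "s \<le> y" "y < s + 1" unfolding y_def n_def by linarith+
    have cy: "c < y"
    proof (cases "T a - of_int n > b")
      case True
      have "T a < T s" using islift_mono[OF Tl s(1)] .
      then have ay: "T a - of_int n < y" unfolding y_def by simp
      show ?thesis
      proof (cases "T a - of_int n \<le> a + 1")
        case True2: True
        have "T a - of_int n \<in> Sc" unfolding Sc_def using True True2
          by (intro CollectI exI[of _ 1] exI[of _ "-n"]) auto
        then show ?thesis using cmin ay by fastforce
      next
        case False
        then show ?thesis using c0 ay by linarith
      qed
    next
      case False
      have "T b - of_int n < a"
      proof (rule ccontr)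
        assume nb: "\<not> T b - of_int n < a"
        define p where "p = max a (T a - of_int n)"
        have "T a < T b" using islift_mono[OF Tl ab(1)] .
        then have pp: "a \<le> p" "p \<le> b" "T a - of_int n \<le> p" "p \<le> T b - of_int n"
          using False nb ab unfolding p_def by auto
        then have "cov p \<in> I0" using I0d by auto
        moreover have "cov p \<in> \<theta> ` I0"
        proof -
          have "cov p = cov (p + of_int n)" by (rule cov_int[symmetric])
          moreover have "p + of_int n \<in> {T a..T b}" using pp by auto
          ultimately have "cov p \<in> cov ` {(T ^^ 1) a..(T ^^ 1) b}" by simp
          then show ?thesis using powimg[of 1] by simp
        qed
        ultimately show False using disj10 by blast
      qed
      moreover have "T s < T b" using islift_mono[OF Tl s(2)] .
      ultimately have "y < a" unfolding y_def by simp
      then show ?thesis using ys s by linarith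
    qed
    have "L \<subseteq> hoarc (cov s) (\<theta> (cov s))"
    proof
      fix z assume "z \<in> L"
      then obtain u where u: "s \<le> u" "u \<le> c" "z = cov u" unfolding L_def by auto
      have "cov (s + (y - s)) = \<theta> (cov s)" using Tc cov_int[of "T s" "-n"] unfolding y_def by simp
      moreover have "0 \<le> y - s" "y - s < 1" "0 \<le> u - s" "u - s < y - s" "z = cov (s + (u - s))"
        using ys u cy by auto
      ultimately show "z \<in> hoarc (cov s) (\<theta> (cov s))" unfolding hoarc_def by blast
    qed
    then show ?thesis using contr[rule_format, OF cov_S1[of s], of L] Lcl False by simp
  qed
  obtain gs where gsG: "\<forall>n. gs n \<in> \<Gamma>" and gsl: "(\<lambda>n. arc_len (gs n ` L)) \<longlonglongrightarrow> 0"
    using Lcon unfolding contractible_def by blast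
  have hp: "\<And>g. g \<in> \<Gamma> \<Longrightarrow> homeo_plus g" using subgrp unfolding homeo_plus_subgroup_def by blast
  define G where "G n = (SOME G. islift G \<and> (\<forall>t. gs n (cov t) = cov (G t)))" for n
  have Gl: "islift (G n) \<and> (\<forall>t. gs n (cov t) = cov (G n t))" for n
    using someI_ex[OF homeo_lift[OF hp[OF gsG[rule_format, of n]]]] unfolding G_def by blast
  define l where "l n = G n c - G n s" for n
  have img: "gs n ` L = cov ` {G n s..G n c}" for n
  proof -
    have "gs n ` L = cov ` (G n ` {s..c})" unfolding L_def image_image using Gl[of n] by simp
    then show ?thesis using islift_image[of "G n" s c] Gl[of n] s by simp
  qed
  have l0: "0 \<le> l n" for n using islift_le[of "G n" s c] Gl[of n] s unfolding l_def by simp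
  have lb: "l n / 2 \<le> arc_len (gs n ` L)" for n
  proof -
    have "G n c \<le> G n (s + 1)" using islift_le[of "G n" c "s+1"] Gl[of n] s by simp
    then have "G n c \<le> G n s + 1" using islift_plus1[of "G n" s] Gl[of n] by simp
    then show ?thesis unfolding img l_def using arc_len_lb[of "G n s" "G n c"] l0[of n] unfolding l_def by simp
  qed
  have "(\<lambda>n. l n / 2) \<longlonglongrightarrow> 0"
    by (rule tendsto_sandwich[OF _ _ tendsto_const gsl]) (use l0 lb in auto)
  then have "(\<lambda>n. 2 * (l n / 2)) \<longlonglongrightarrow> 2 * 0" by (rule tendsto_mult_left)
  then have lt: "l \<longlonglongrightarrow> 0" by simp
  define r where "r n = G n s - of_int (floor (G n s))" for n
  have rin: "\<forall>n. r n \<in> {0..1}" unfolding r_def by (auto; linarith)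
  obtain r0 \<sigma> where r0: "r0 \<in> {0..1}" "strict_mono \<sigma>" "(r \<circ> \<sigma>) \<longlonglongrightarrow> r0"
    using seq_compactE[OF compact_imp_seq_compact[OF compact_Icc] rin] by blast
  define q where "q = cov r0"
  have qS1: "q \<in> S1" unfolding q_def by (rule cov_S1)
  define V where "V = cov ` {s<..<b}"
  have Vop: "openin (top_of_set S1) V" unfolding V_def using cov_open_arc[of s b] s ab by simp
  obtain W where W: "open W" "V = S1 \<inter> W" using Vop openin_open by blast
  have "cov ((s + b) / 2) \<in> V" unfolding V_def using s by auto
  then have "W \<inter> closure {g q |g. g \<in> \<Gamma>} \<noteq> {}"
    using minimal qS1 W unfolding minimal_action_def by auto
  then have "W \<inter> {g q |g. g \<in> \<Gamma>} \<noteq> {}" using open_Int_closure_eq_empty[OF W(1)] by blast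
  then obtain f where f: "f \<in> \<Gamma>" "f q \<in> W" by blast
  obtain F where Fl: "islift F" "\<forall>t. f (cov t) = cov (F t)" using homeo_lift[OF hp[OF f(1)]] by blast
  have "f q \<in> S1" using lift_S1[OF Fl(2) qS1] .
  then have "f q \<in> V" using W f by blast
  then obtain s1 where s1: "s < s1" "s1 < b" "cov (F r0) = cov s1" unfolding V_def q_def using Fl(2) by auto
  obtain k1 where k1: "F r0 = s1 + of_int k1" using cov_eq[OF s1(3)] by blast
  define e1 where "e1 = min (s1 - s) (b - s1)"
  have e1: "e1 > 0" unfolding e1_def using s1 by simp
  obtain eta where eta: "eta > 0" "\<forall>x. dist x r0 < eta \<longrightarrow> dist (F x) (F r0) < e1"
    using continuous_on_iff[THEN iffD1, OF islift_cont[OF Fl(1), of UNIV], rule_format, of r0 e1] e1 by auto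
  obtain N1 where N1: "\<forall>n\<ge>N1. norm ((r \<circ> \<sigma>) n - r0) < eta / 2"
    using r0(3) eta(1) unfolding LIMSEQ_iff by (meson half_gt_zero)
  obtain N2 where N2: "\<forall>n\<ge>N2. norm ((l \<circ> \<sigma>) n - 0) < eta / 2"
    using LIMSEQ_subseq_LIMSEQ[OF lt r0(2)] eta(1) unfolding LIMSEQ_iff by (meson half_gt_zero)
  define m where "m = \<sigma> (max N1 N2)"
  have rm: "\<bar>r m - r0\<bar> < eta / 2" using N1 unfolding m_def by auto
  have lm: "\<bar>l m\<bar> < eta / 2" using N2 unfolding m_def by auto
  define fl where "fl = floor (G m s)"
  define H where "H t = F (G m t) - of_int (fl + k1)" for t
  have Gml: "islift (G m)" using Gl by blast
  have Hin: "s < H t \<and> H t < b" if "s \<le> t" "t \<le> c" for t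
  proof -
    have "G m s \<le> G m t" "G m t \<le> G m c" using islift_le[OF Gml] that by auto
    then have "\<bar>(G m t - of_int fl) - r0\<bar> < eta"
      using rm lm unfolding r_def l_def fl_def by (simp add: abs_less_iff; linarith)
    then have "\<bar>F (G m t - of_int fl) - F r0\<bar> < e1" using eta(2) by (simp add: dist_real_def)
    moreover have "F (G m t - of_int fl) = F (G m t) - of_int fl"
      using islift_int[OF Fl(1), of "G m t" "-fl"] by simp
    ultimately show ?thesis using k1 unfolding e1_def H_def by (simp add: abs_less_iff; linarith)
  qed
  define h where "h = f \<circ> gs m"
  have hG: "h \<in> \<Gamma>" using subgrp f(1) gsG unfolding homeo_plus_subgroup_def h_def by blast
  have hc: "h (cov t) = cov (H t)" for t
  proof -
    have "h (cov t) = cov (F (G m t))" unfolding h_def using Gl[of m] Fl(2) by simp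
    also have "\<dots> = cov (H t + of_int (fl + k1))" unfolding H_def by simp
    also have "\<dots> = cov (H t)" by (rule cov_int)
    finally show ?thesis .
  qed
  have hcomm: "h \<circ> \<theta> = \<theta> \<circ> h"
  proof -
    have "f \<circ> \<theta> = \<theta> \<circ> f" "gs m \<circ> \<theta> = \<theta> \<circ> gs m" using commute f(1) gsG by auto
    then show ?thesis unfolding h_def by (metis comp_assoc)
  qed
  have cH: "continuous_on {s..c} (\<lambda>t. H t - t)"
    unfolding H_def
    by (intro continuous_intros continuous_on_compose2[OF islift_cont[OF Fl(1), of UNIV] islift_cont[OF Gml]]) auto
  have "H c - c \<le> 0" "0 \<le> H s - s" using Hin[of c] Hin[of s] s c0(2) by auto
  then obtain tf where tf: "s \<le> tf" "tf \<le> c" "H tf - tf = 0"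
    using IVT2'[of "\<lambda>t. H t - t" c 0 s, OF _ _ _ cH] s by auto
  have fixp: "cov tf \<in> Fix h" unfolding Fix_def using hc[of tf] tf cov_S1 by simp
  have hCU: "h z \<in> U" if z: "z \<in> S1" "z \<notin> U" for z
  proof -
    obtain t where zt: "z = cov t" using cov_surj z by blast
    have nt: "\<forall>i (k::int). \<not> ((T ^^ i) a + of_int k < t \<and> t < (T ^^ i) b + of_int k)"
    proof (intro allI notI)
      fix i and k::int assume "(T ^^ i) a + of_int k < t \<and> t < (T ^^ i) b + of_int k"
      then have "(T ^^ i) a < t - of_int k" "t - of_int k < (T ^^ i) b" by auto
      then have "cov (t - of_int k) \<in> U" by (rule Uin)
      moreover have "cov (t - of_int k) = z" using zt cov_int[of t "-k"] by simp
      ultimately show False using z by simp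
    qed
    obtain j k u where u: "b \<le> u" "u \<le> c" "t = (T ^^ j) u + of_int k"
      using cover[OF Tl ab(1) c0(2) c0(1) finE nt] by blast
    have "z = (\<theta> ^^ j) (cov u)" using zt u powc cov_int by simp
    then have "h z = (\<theta> ^^ j) (h (cov u))" using commute_pow[OF hcomm] by simp
    also have "\<dots> = cov ((T ^^ j) (H u))" using hc powc by simp
    finally have hz: "h z = cov ((T ^^ j) (H u))" .
    have "a < H u" "H u < b" using Hin[of u] u s by auto
    then have "(T ^^ j) a < (T ^^ j) (H u)" "(T ^^ j) (H u) < (T ^^ j) b"
      using islift_mono[OF islift_pow[OF Tl]] by auto
    then show ?thesis using hz Uin by simp
  qed
  have "Fix h \<noteq> {}" using fixp by blast
  moreover have "Fix h \<subseteq> U"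
  proof
    fix z assume "z \<in> Fix h"
    then have "z \<in> S1" "h z = z" unfolding Fix_def by auto
    then show "z \<in> U" using hCU by force
  qed
  moreover have "h ` (S1 - U) \<subseteq> U" using hCU by blast
  ultimately show ?thesis unfolding K_def[symmetric] U_def[symmetric] using hG by blast
qed


end
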